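(* Let $k$ be a field, $V$ a $k$-vector space, $\varphi\in\operatorname{End}_k(V)$ a finite potent endomorphism with AST-decomposition $V=W_\varphi\oplus U_\varphi$ and core-nilpotent decomposition $\varphi=\varphi_1+\varphi_2$. If $\psi\in\operatorname{End}_k(V)$ is a G-Drazin inverse of $\varphi$, then $\psi=\varphi^D+\psi_2$, where $\varphi^D$ is the Drazin inverse of $\varphi$ and $\psi_2\in\operatorname{End}_k(V)$ is the unique linear map with $\psi_2(v)=0$ for $v\in W_\varphi$ and $\psi_2(v)=\psi(v)$ for $v\in U_\varphi$; moreover $\psi_2$ is a G-Drazin inverse of $\varphi_2$.
   Context: An endomorphism $\varphi$ of a $k$-vector space $V$ is finite potent if $\varphi^n(V)$ is finite dimensional for some $n$. For such $\varphi$, the AST-decomposition is $V=U_\varphi\oplus W_\varphi$ where $U_\varphi=\{v\in V: \varphi^m(v)=0 \text{ for some } m\}$ and $W_\varphi=\{v\in V: p(\varphi)(v)=0 \text{ for some } p(x)\in k[x] \text{ coprime to } x\}$; both are $\varphi$-invariant, $\varphi|_{U_\varphi}$ is nilpotent, $W_\varphi$ is finite dimensional and $\varphi|_{W_\varphi}$ is an automorphism. The index $i(\varphi)$ is the nilpotency order of $\varphi|_{U_\varphi}$. The Drazin inverse $\varphi^D$ is the linear map equal to $(\varphi|_{W_\varphi})^{-1}$ on $W_\varphi$ and to $0$ on $U_\varphi$. The core-nilpotent decomposition is $\varphi=\varphi_1+\varphi_2$ with $\varphi_1=\varphi\circ\varphi^D\circ\varphi$ (equal to $\varphi$ on $W_\varphi$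 and $0$ on $U_\varphi$) and $\varphi_2=\varphi-\varphi_1$ (equal to $0$ on $W_\varphi$ and $\varphi$ on $U_\varphi$). For a finite potent $\theta$ with index $s=i(\theta)$, an endomorphism $\psi$ is a G-Drazin inverse of $\theta$ if $\theta\circ\psi\circ\theta=\theta$ and $\psi\circ\theta^{s}=\theta^{s}\circ\psi$. *)

theory Defs
  imports Main "HOL-Computational_Algebra.Polynomial"
begin

text \<open>Throughout, scale :: 'k::field => 'v => 'v is the scalar multiplication of a
k-vector space V (the type 'v), assumed to satisfy vector_space scale.
Endomorphisms of V are the linear maps 'v => 'v.\<close>

definition endo :: "('k::field \<Rightarrow> 'v::ab_group_add \<Rightarrow> 'v) \<Rightarrow> ('v \<Rightarrow> 'v) \<Rightarrow> bool" where
  "endo scale f \<longleftrightarrow> Vector_Spaces.linear scale scale f"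

definition fin_dim_subspace :: "('k::field \<Rightarrow> 'v::ab_group_add \<Rightarrow> 'v) \<Rightarrow> 'v set \<Rightarrow> bool" where
  "fin_dim_subspace scale S \<longleftrightarrow> (\<exists>B. finite B \<and> module.span scale B = S)"

definition finite_potent :: "('k::field \<Rightarrow> 'v::ab_group_add \<Rightarrow> 'v) \<Rightarrow> ('v \<Rightarrow> 'v) \<Rightarrow> bool" where
  "finite_potent scale \<phi> \<longleftrightarrow> endo scale \<phi> \<and> (\<exists>n. fin_dim_subspace scale (range (\<phi> ^^ n)))"

definition poly_endo :: "('k::field \<Rightarrow> 'v::ab_group_add \<Rightarrow> 'v) \<Rightarrow> 'k poly \<Rightarrow> ('v \<Rightarrow> 'v) \<Rightarrow> 'v \<Rightarrow> 'v" where
  "poly_endo scale p \<phi> v = (\<Sum>i\<le>degree p. scale (coeff p i) ((\<phi> ^^ i) v))"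

definition U_part :: "('v::zero \<Rightarrow> 'v) \<Rightarrow> 'v set" where
  "U_part \<phi> = {v. \<exists>m. (\<phi> ^^ m) v = 0}"

definition W_part :: "('k::field \<Rightarrow> 'v::ab_group_add \<Rightarrow> 'v) \<Rightarrow> ('v \<Rightarrow> 'v) \<Rightarrow> 'v set" where
  "W_part scale \<phi> = {v. \<exists>p::'k poly. coprime p [:0, 1:] \<and> poly_endo scale p \<phi> v = 0}"

definition index :: "('v::zero \<Rightarrow> 'v) \<Rightarrow> nat" where
  "index \<phi> = (LEAST n. \<forall>u\<in>U_part \<phi>. (\<phi> ^^ n) u = 0)"

definition drazin_inv :: "('k::field \<Rightarrow> 'v::ab_group_add \<Rightarrow> 'v) \<Rightarrow> ('v \<Rightarrow> 'v) \<Rightarrow> 'v \<Rightarrow> 'v" where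
  "drazin_inv scale \<phi> = (THE d. endo scale d
      \<and> (\<forall>w\<in>W_part scale \<phi>. d w \<in> W_part scale \<phi> \<and> \<phi> (d w) = w)
      \<and> (\<forall>u\<in>U_part \<phi>. d u = 0))"

definition core_part :: "('k::field \<Rightarrow> 'v::ab_group_add \<Rightarrow> 'v) \<Rightarrow> ('v \<Rightarrow> 'v) \<Rightarrow> 'v \<Rightarrow> 'v" where
  "core_part scale \<phi> = \<phi> \<circ> drazin_inv scale \<phi> \<circ> \<phi>"

definition nil_part :: "('k::field \<Rightarrow> 'v::ab_group_add \<Rightarrow> 'v) \<Rightarrow> ('v \<Rightarrow> 'v) \<Rightarrow> 'v \<Rightarrow> 'v" where
  "nil_part scale \<phi> = (\<lambda>v. \<phi> v - core_part scale \<phi> v)"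

definition G_drazin :: "('k::field \<Rightarrow> 'v::ab_group_add \<Rightarrow> 'v) \<Rightarrow> ('v \<Rightarrow> 'v) \<Rightarrow> ('v \<Rightarrow> 'v) \<Rightarrow> bool" where
  "G_drazin scale \<theta> \<psi> \<longleftrightarrow> finite_potent scale \<theta> \<and> endo scale \<psi>
     \<and> \<theta> \<circ> \<psi> \<circ> \<theta> = \<theta>
     \<and> \<psi> \<circ> (\<theta> ^^ index \<theta>) = (\<theta> ^^ index \<theta>) \<circ> \<psi>"

end

theory Submission
  imports Defs "HOL-Computational_Algebra.Polynomial_Factorial"
begin

lemma bezout_eucl_aux:
  fixes a b :: "'a::{euclidean_semiring_cancel, idom}"
  shows "\<exists>g x y. g = x * a + y * b \<and> g dvd a \<and> g dvd b"
proof (induction "euclidean_size b" arbitrary: a b rule: less_induct)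
  case less
  show ?case
  proof (cases "b = 0")
    case True
    then show ?thesis by (intro exI[of _ a] exI[of _ 1] exI[of _ 0]) auto
  next
    case False
    then have "euclidean_size (a mod b) < euclidean_size b" by (rule mod_size_less)
    from less[OF this] obtain g x y where g: "g = x * b + y * (a mod b)" "g dvd b" "g dvd a mod b"
      by blast
    have am: "a mod b = a - (a div b) * b" by (simp add: minus_div_mult_eq_mod)
    have "g = y * a + (x - y * (a div b)) * b" using g(1) am by (simp add: algebra_simps)
    moreover have "g dvd a" using g(2,3) by (metis dvd_mod_iff)
    ultimately show ?thesis using g(2) by blast
  qed
qed

lemma bezout_coprime:
  fixes a b :: "'a::{euclidean_semiring_cancel, idom}"
  assumes "coprime a b"
  shows "\<exists>x y. x * a + y * b = 1"
proof -
  obtain g x y where g: "g = x * a + y * b" "g dvd a" "g dvd b" using bezout_eucl_aux by blast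
  then have "is_unit g" using assms coprime_common_divisor by blast
  then obtain h where "1 = g * h" by (auto elim: dvdE)
  then have "(h * x) * a + (h * y) * b = 1" using g(1) by (simp add: algebra_simps)
  then show ?thesis by blast
qed

lemma X_coprime:
  fixes p :: "'k::field poly"
  assumes "\<not> [:0,1:] dvd p"
  shows "coprime p [:0,1:]"
proof (rule coprimeI)
  fix d assume d: "d dvd p" "d dvd [:0,1:]"
  have pr: "prime_elem [:0::'k,1:]" by (rule prime_elem_linear_field_poly) simp
  from d(2) obtain k where k: "[:0,1:] = d * k" by (auto elim: dvdE)
  then have "[:0,1:] dvd d * k" by simp
  then have "[:0,1:] dvd d \<or> [:0,1:] dvd k" using pr prime_elem_dvd_multD by blast
  then show "is_unit d"
  proof
    assume "[:0,1:] dvd d" then have False using d(1) assms dvd_trans by blast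
    then show ?thesis ..
  next
    assume "[:0,1:] dvd k"
    then obtain j where "k = [:0,1:] * j" by (auto elim: dvdE)
    with k have e: "[:0,1:] * 1 = [:0,1:] * (d * j)" by (metis mult.left_commute mult.right_neutral)
    have nz: "[:0,1:] \<noteq> (0::'k poly)" by simp
    from e have "d * j = 1" by (simp only: mult_left_cancel[OF nz])
    then show ?thesis by (metis dvdI)
  qed
qed

lemma poly_bez:
  fixes p q :: "'k::field poly"
  assumes "coprime p q" shows "\<exists>x y. x * p + y * q = 1"
  using bezout_coprime[OF assms] .

definition lin :: "('k::field \<Rightarrow> 'v::ab_group_add \<Rightarrow> 'v) \<Rightarrow> ('v \<Rightarrow> 'v) \<Rightarrow> bool" where
  "lin sc f \<longleftrightarrow> (\<forall>x y. f (x + y) = f x + f y) \<and> (\<forall>c x. f (sc c x) = sc c (f x))"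

context vector_space
begin

lemma lin_add: "lin scale f \<Longrightarrow> f (x + y) = f x + f y" by (simp add: lin_def)
lemma lin_scale: "lin scale f \<Longrightarrow> f (c *s x) = c *s f x" by (simp add: lin_def)
lemma lin_0: "lin scale f \<Longrightarrow> f 0 = 0"
  using lin_add[of f 0 0] by simp
lemma lin_diff: "lin scale f \<Longrightarrow> f (x - y) = f x - f y"
  using lin_add[of f "x - y" y] by (simp add: algebra_simps)
lemma lin_sum: "lin scale f \<Longrightarrow> f (sum g A) = (\<Sum>a\<in>A. f (g a))"
  by (induction A rule: infinite_finite_induct) (auto simp: lin_0 lin_add)
lemma lin_comp: "lin scale f \<Longrightarrow> lin scale g \<Longrightarrow> lin scale (\<lambda>v. f (g v))"
  by (simp add: lin_def)
lemma lin_id: "lin scale (\<lambda>v. v)" by (simp add: lin_def)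
lemma lin_pow: "lin scale f \<Longrightarrow> lin scale (f ^^ n)"
  by (induction n) (auto simp: lin_def)
lemma endo_lin: "endo scale f \<longleftrightarrow> lin scale f"
proof -
  have "Vector_Spaces.linear scale scale f \<longleftrightarrow> (vector_space scale \<and> vector_space scale \<and>
     (\<forall>x y. f (x + y) = f x + f y) \<and> (\<forall>c x. f (scale c x) = scale c (f x)))"
    by (rule Vector_Spaces.linear_iff)
  then show ?thesis unfolding endo_def lin_def using vector_space_axioms by blast
qed

end

locale FP = vector_space scale for scale :: "'k::field \<Rightarrow> 'v::ab_group_add \<Rightarrow> 'v" (infixr \<open>*s\<close> 75) +
  fixes \<phi> :: "'v \<Rightarrow> 'v"
  assumes linphi: "lin scale \<phi>"
begin

abbreviation PE :: "'k poly \<Rightarrow> 'v \<Rightarrow> 'v" where "PE p \<equiv> poly_endo scale p \<phi>"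

lemma PE_bound: "degree p \<le> D \<Longrightarrow> PE p v = (\<Sum>i\<le>D. coeff p i *s (\<phi> ^^ i) v)"
  unfolding poly_endo_def by (rule sum.mono_neutral_left) (auto simp: coeff_eq_0)

lemma PE_pCons: "PE (pCons a p) v = a *s v + PE p (\<phi> v)"
proof -
  have "PE (pCons a p) v = (\<Sum>i\<le>Suc (degree p). coeff (pCons a p) i *s (\<phi> ^^ i) v)"
    by (rule PE_bound) (rule degree_pCons_le)
  also have "\<dots> = a *s v + (\<Sum>i\<le>degree p. coeff p i *s (\<phi> ^^ i) (\<phi> v))"
    by (subst sum.atMost_Suc_shift) (simp add: funpow_Suc_right del: funpow.simps)
  also have "\<dots> = a *s v + PE p (\<phi> v)" by (simp add: poly_endo_def)
  finally show ?thesis .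
qed

lemma PE_phi: "PE p (\<phi> v) = \<phi> (PE p v)"
  unfolding poly_endo_def
  by (simp add: lin_sum[OF linphi] lin_scale[OF linphi] funpow_swap1)

lemma PE_zero_poly[simp]: "PE 0 v = 0"
  by (simp add: poly_endo_def)

lemma PE_lin: "lin scale (PE p)"
proof (induction p)
  case 0 then show ?case by (simp add: lin_def)
next
  case (pCons a p)
  show ?case unfolding lin_def PE_pCons
    using pCons.IH lin_add[OF linphi] lin_scale[OF linphi]
    by (auto simp: lin_def algebra_simps scale_left_commute)
qed

lemma PE_0[simp]: "PE p 0 = 0" using lin_0[OF PE_lin] .

lemma PE_add: "PE (p + q) v = PE p v + PE q v"
proof -
  let ?D = "max (degree p) (degree q)"
  have "PE (p + q) v = (\<Sum>i\<le>?D. coeff (p + q) i *s (\<phi> ^^ i) v)"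
    by (rule PE_bound) (rule degree_add_le_max)
  also have "\<dots> = (\<Sum>i\<le>?D. coeff p i *s (\<phi> ^^ i) v) + (\<Sum>i\<le>?D. coeff q i *s (\<phi> ^^ i) v)"
    by (simp add: scale_left_distrib sum.distrib)
  also have "\<dots> = PE p v + PE q v"
    by (simp add: PE_bound[of p ?D] PE_bound[of q ?D])
  finally show ?thesis .
qed

lemma PE_smult: "PE (smult c p) v = c *s PE p v"
proof -
  have "PE (smult c p) v = (\<Sum>i\<le>degree p. coeff (smult c p) i *s (\<phi> ^^ i) v)"
    by (rule PE_bound) (rule degree_smult_le)
  also have "\<dots> = c *s PE p v"
    by (simp add: poly_endo_def scale_sum_right)
  finally show ?thesis .
qed

lemma PE_diff: "PE (p - q) v = PE p v - PE q v"
  using PE_add[of "p - q" q v] by (simp add: algebra_simps)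

lemma PE_mult: "PE (p * q) v = PE p (PE q v)"
proof (induction p arbitrary: v)
  case 0 then show ?case by simp
next
  case (pCons a p)
  show ?case
    by (simp add: PE_add PE_smult PE_pCons pCons.IH PE_phi)
qed

lemma PE_comm: "PE p (PE q v) = PE q (PE p v)"
  by (metis PE_mult mult.commute)

lemma PE_1[simp]: "PE 1 v = v"
  by (simp add: one_pCons PE_pCons)

lemma PE_X: "PE [:0,1:] v = \<phi> v"
  by (simp add: PE_pCons)

lemma PE_Xpow: "PE ([:0,1:] ^ k) v = (\<phi> ^^ k) v"
  by (induction k arbitrary: v) (simp_all add: PE_pCons funpow_swap1)

lemma PE_pow_comm: "PE p ((\<phi> ^^ k) v) = (\<phi> ^^ k) (PE p v)"
  by (metis PE_Xpow PE_comm)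

end

context FP
begin

lemma annih:
  assumes fin: "finite B" and sp: "span B = range (\<phi> ^^ n)"
  shows "\<exists>Q. Q \<noteq> 0 \<and> (\<forall>v. PE Q ((\<phi> ^^ n) v) = 0)"
proof -
  have inv: "(\<phi> ^^ i) x \<in> span B" if "x \<in> span B" for x i
  proof -
    from that sp obtain y where "x = (\<phi> ^^ n) y" by auto
    then have "(\<phi> ^^ i) x = (\<phi> ^^ n) ((\<phi> ^^ i) y)"
      by (metis add.commute comp_apply funpow_add)
    then show ?thesis using sp by auto
  qed
  have per: "\<exists>q. q \<noteq> 0 \<and> PE q b = 0" if b: "b \<in> B" for b
  proof -
    define d where "d = card B"
    define f where "f = (\<lambda>i. (\<phi> ^^ i) b)"
    have bin: "b \<in> span B" using b by (rule span_base)
    show ?thesis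
    proof (cases "inj_on f {..d}")
      case False
      then obtain i j where ij: "i \<noteq> j" "f i = f j" unfolding inj_on_def by auto
      define q :: "'k poly" where "q = [:0,1:] ^ i - [:0,1:] ^ j"
      have "q \<noteq> 0"
      proof
        assume "q = 0"
        then have "[:0::'k,1:] ^ i = [:0,1:] ^ j" by (simp add: q_def)
        then have "degree ([:0::'k,1:] ^ i) = degree ([:0::'k,1:] ^ j)" by simp
        then show False using ij(1) by (simp only: degree_linear_power)
      qed
      moreover have "PE q b = 0"
        using ij(2) by (simp add: q_def PE_diff PE_Xpow f_def)
      ultimately show ?thesis by blast
    next
      case True
      define S where "S = f ` {..d}"
      have cS: "card S = Suc d" unfolding S_def using True by (simp add: card_image)
      have fS: "finite S" unfolding S_def by simp
      have sub: "S \<subseteq> span B" unfolding S_def f_def using inv bin by auto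
      have "dependent S"
      proof (rule ccontr)
        assume "\<not> dependent S"
        from independent_span_bound[OF fin this sub] have "card S \<le> card B" by simp
        then show False using cS d_def by simp
      qed
      then obtain u where u: "\<exists>v\<in>S. u v \<noteq> 0" "(\<Sum>v\<in>S. u v *s v) = 0"
        using dependent_finite[OF fS] by auto
      define q where "q = (\<Sum>i\<le>d. monom (u (f i)) i)"
      have cq: "coeff q i = (if i \<le> d then u (f i) else 0)" for i
        unfolding q_def coeff_sum coeff_monom by simp
      have "q \<noteq> 0"
      proof
        assume "q = 0"
        from u(1) obtain i where "i \<le> d" "u (f i) \<noteq> 0" unfolding S_def by auto
        then have "coeff q i \<noteq> 0" by (simp add: cq)
        then show False using \<open>q = 0\<close> by simp
      qed
      moreover have "PE q b = 0"
      proof -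
        have dq: "degree q \<le> d" by (rule degree_le) (auto simp: cq)
        have "PE q b = (\<Sum>i\<le>d. coeff q i *s f i)" unfolding PE_bound[OF dq] f_def ..
        also have "\<dots> = (\<Sum>i\<le>d. u (f i) *s f i)" by (simp add: cq)
        also have "\<dots> = (\<Sum>v\<in>S. u v *s v)" unfolding S_def
          by (simp add: sum.reindex[OF True])
        finally show ?thesis using u(2) by simp
      qed
      ultimately show ?thesis by blast
    qed
  qed
  then obtain qf where qf: "\<And>b. b \<in> B \<Longrightarrow> qf b \<noteq> 0 \<and> PE (qf b) b = 0" by metis
  define Q where "Q = (\<Prod>b\<in>B. qf b)"
  have "Q \<noteq> 0" unfolding Q_def using fin qf by (simp add: prod_zero_iff)
  moreover have QB: "PE Q b = 0" if "b \<in> B" for b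
  proof -
    have "Q = qf b * (\<Prod>c\<in>B - {b}. qf c)" unfolding Q_def using fin that by (rule prod.remove)
    then have "PE Q b = PE (\<Prod>c\<in>B - {b}. qf c) (PE (qf b) b)"
      by (simp add: PE_mult PE_comm)
    then show ?thesis using qf[OF that] by simp
  qed
  moreover have "PE Q ((\<phi> ^^ n) v) = 0" for v
  proof -
    have "(\<phi> ^^ n) v \<in> span B" using sp by auto
    then obtain c where "(\<phi> ^^ n) v = (\<Sum>b\<in>B. c b *s b)" using span_finite[OF fin] by auto
    then show ?thesis
      by (simp add: lin_sum[OF PE_lin] lin_scale[OF PE_lin] QB)
  qed
  ultimately show ?thesis by blast
qed

end

lemma bez_pow:
  fixes x p c e :: "'a::comm_ring_1"
  assumes "c * x + e * p = 1"
  shows "\<exists>a b. a * x ^ m + b * p = 1"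
proof (induction m)
  case 0 show ?case by (intro exI[of _ 1] exI[of _ 0]) simp
next
  case (Suc m)
  then obtain a b where ab: "a * x ^ m + b * p = 1" by blast
  have "(a * x ^ m + b * p) * (c * x + e * p) = 1" using ab assms by simp
  then have "(a * c) * x ^ Suc m + (a * x ^ m * e + b * c * x + b * e * p) * p = 1"
    by (simp add: algebra_simps)
  then show ?case by blast
qed

locale FP2 = FP scale \<phi> for scale :: "'k::field \<Rightarrow> 'v::ab_group_add \<Rightarrow> 'v" (infixr \<open>*s\<close> 75) and \<phi> +
  fixes p :: "'k::field poly" and N :: nat and a b c e :: "'k poly"
  assumes pc: "coprime p [:0,1:]"
    and ann: "\<And>v. PE p ((\<phi> ^^ N) v) = 0"
    and bez1: "a * [:0,1:] ^ N + b * p = 1"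
    and bez2: "c * [:0,1:] + e * p = 1"
begin

definition PU where "PU v = PE b (PE p v)"
definition PW where "PW v = PE a ((\<phi> ^^ N) v)"
definition D0 where "D0 v = PE c (PW v)"

lemma ann2: "(\<phi> ^^ N) (PE p v) = 0"
  unfolding PE_pow_comm[symmetric] by (rule ann)

lemma decomp: "v = PU v + PW v"
proof -
  have "PE (a * [:0,1:] ^ N + b * p) v = PE a ((\<phi> ^^ N) v) + PE b (PE p v)"
    by (simp only: PE_add PE_mult PE_Xpow)
  then show ?thesis using bez1 by (simp add: PU_def PW_def add.commute)
qed

lemma UW0:
  assumes "(\<phi> ^^ m) v = 0" "coprime q [:0,1:]" "PE q v = 0"
  shows "v = 0"
proof -
  have "coprime [:0,1:] q" using assms(2) by (simp add: coprime_commute)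
  then obtain c' e' where "c' * [:0,1:] + e' * q = 1" using bezout_coprime by blast
  then obtain r s where rs: "r * [:0,1:] ^ m + s * q = 1" using bez_pow by blast
  have "PE (r * [:0,1:] ^ m + s * q) v = PE r ((\<phi> ^^ m) v) + PE s (PE q v)"
    by (simp only: PE_add PE_mult PE_Xpow)
  then show ?thesis using assms(1,3) rs by simp
qed

lemma PU_U: "(\<phi> ^^ N) (PU v) = 0"
  unfolding PU_def PE_pow_comm[symmetric] by (simp add: ann)

lemma PW_W: "PE p (PW v) = 0"
  unfolding PW_def by (subst PE_comm) (simp add: ann)

lemma lin_PU: "lin scale PU"
  unfolding PU_def[abs_def] by (rule lin_comp[OF PE_lin PE_lin])
lemma lin_PW: "lin scale PW"
  unfolding PW_def[abs_def] by (rule lin_comp[OF PE_lin lin_pow[OF linphi]])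
lemma lin_D0: "lin scale D0"
  unfolding D0_def[abs_def] by (rule lin_comp[OF PE_lin lin_PW])

lemma PU_on_U: "(\<phi> ^^ N) u = 0 \<Longrightarrow> PU u = u"
  using decomp[of u] by (simp add: PW_def)
lemma PW_on_W: "PE p w = 0 \<Longrightarrow> PW w = w"
  using decomp[of w] by (simp add: PU_def)
lemma PU_on_W: "PE p w = 0 \<Longrightarrow> PU w = 0"
  by (simp add: PU_def)
lemma PW_on_U: "(\<phi> ^^ N) u = 0 \<Longrightarrow> PW u = 0"
  by (simp add: PW_def)

lemma pow_comm: "(\<phi> ^^ m) ((\<phi> ^^ n) v) = (\<phi> ^^ n) ((\<phi> ^^ m) v)"
  by (metis add.commute funpow_add comp_apply)

lemma inU_iff: "v \<in> U_part \<phi> \<longleftrightarrow> (\<phi> ^^ N) v = 0"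
proof
  assume "v \<in> U_part \<phi>"
  then obtain m where m: "(\<phi> ^^ m) v = 0" by (auto simp: U_part_def)
  have "(\<phi> ^^ m) (PW v) = PE a ((\<phi> ^^ m) ((\<phi> ^^ N) v))"
    unfolding PW_def by (rule PE_pow_comm[symmetric])
  also have "\<dots> = PE a ((\<phi> ^^ N) ((\<phi> ^^ m) v))" by (subst pow_comm) (rule refl)
  also have "\<dots> = 0" using m lin_0[OF lin_pow[OF linphi]] by simp
  finally have "PW v = 0" using UW0[OF _ pc PW_W] by blast
  then have "PU v = v" using decomp[of v, symmetric] by simp
  then show "(\<phi> ^^ N) v = 0" using PU_U[of v] by simp
next
  assume "(\<phi> ^^ N) v = 0" then show "v \<in> U_part \<phi>" by (auto simp: U_part_def)
qed

lemma inW_iff: "v \<in> W_part scale \<phi> \<longleftrightarrow> PE p v = 0"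
proof
  assume "v \<in> W_part scale \<phi>"
  then obtain q where q: "coprime q [:0,1:]" "PE q v = 0" by (auto simp: W_part_def)
  have "PE q (PU v) = PE b (PE p (PE q v))" unfolding PU_def
    by (metis PE_comm)
  then have "PE q (PU v) = 0" using q(2) by simp
  then have "PU v = 0" using UW0[OF PU_U q(1)] by blast
  then have "PW v = v" using decomp[of v, symmetric] by simp
  then show "PE p v = 0" using PW_W[of v] by simp
next
  assume "PE p v = 0" then show "v \<in> W_part scale \<phi>" using pc by (auto simp: W_part_def)
qed

lemma phiD: "PE p w = 0 \<Longrightarrow> \<phi> (PE c w) = w"
proof -
  assume w: "PE p w = 0"
  have "w = PE (c * [:0,1:] + e * p) w" using bez2 by simp
  also have "\<dots> = PE c (PE [:0,1:] w) + PE e (PE p w)" by (simp only: PE_add PE_mult)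
  also have "\<dots> = PE c (\<phi> w)" using w by (simp add: PE_X)
  finally show ?thesis by (simp add: PE_phi)
qed

lemma phi_U: "(\<phi> ^^ N) u = 0 \<Longrightarrow> (\<phi> ^^ N) (\<phi> u) = 0"
  by (metis funpow_swap1 lin_0 linphi)
lemma phi_W: "PE p w = 0 \<Longrightarrow> PE p (\<phi> w) = 0"
  by (metis PE_phi lin_0 linphi)

lemma D0_W: "PE p w = 0 \<Longrightarrow> PE p (D0 w) = 0 \<and> \<phi> (D0 w) = w"
  unfolding D0_def by (simp add: PW_on_W phiD) (metis PE_comm PE_0)
lemma D0_U: "(\<phi> ^^ N) u = 0 \<Longrightarrow> D0 u = 0"
  unfolding D0_def by (simp add: PW_on_U)

lemma drazin_eq: "drazin_inv scale \<phi> = D0"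
  unfolding drazin_inv_def
proof (rule the_equality)
  show "endo scale D0 \<and> (\<forall>w\<in>W_part scale \<phi>. D0 w \<in> W_part scale \<phi> \<and> \<phi> (D0 w) = w) \<and>
      (\<forall>u\<in>U_part \<phi>. D0 u = 0)"
    by (simp add: endo_lin lin_D0 inU_iff inW_iff D0_W D0_U)
next
  fix d assume d: "endo scale d \<and> (\<forall>w\<in>W_part scale \<phi>. d w \<in> W_part scale \<phi> \<and> \<phi> (d w) = w) \<and>
      (\<forall>u\<in>U_part \<phi>. d u = 0)"
  then have ld: "lin scale d" by (simp add: endo_lin)
  show "d = D0"
  proof
    fix v
    have onW: "d w = D0 w" if w: "PE p w = 0" for w
    proof -
      define x where "x = d w - D0 w"
      have "PE p x = 0" using d w D0_W[OF w] by (simp add: x_def PE_diff inW_iff lin_diff[OF PE_lin])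
      moreover have "(\<phi> ^^ 1) x = 0" using d w D0_W[OF w]
        by (simp add: x_def inW_iff lin_diff[OF linphi])
      ultimately have "x = 0" using UW0[OF _ pc] by blast
      then show ?thesis by (simp add: x_def)
    qed
    have "d v = d (PU v) + d (PW v)" using lin_add[OF ld, of "PU v" "PW v"] decomp[of v, symmetric] by simp
    also have "\<dots> = D0 (PW v)" using d PU_U PW_W onW by (simp add: inU_iff)
    also have "\<dots> = D0 (PU v) + D0 (PW v)" using D0_U[OF PU_U] by simp
    also have "\<dots> = D0 v" using lin_add[OF lin_D0, of "PU v" "PW v"] decomp[of v, symmetric] by simp
    finally show "d v = D0 v" .
  qed
qed

end

context FP2
begin

lemma main:
  assumes lpsi: "lin scale \<psi>"
    and g1: "\<phi> \<circ> \<psi> \<circ> \<phi> = \<phi>"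
    and g2: "\<psi> \<circ> (\<phi> ^^ index \<phi>) = (\<phi> ^^ index \<phi>) \<circ> \<psi>"
  shows "(\<exists>!\<psi>2. endo scale \<psi>2
            \<and> (\<forall>w\<in>W_part scale \<phi>. \<psi>2 w = 0)
            \<and> (\<forall>u\<in>U_part \<phi>. \<psi>2 u = \<psi> u))
       \<and> (\<forall>\<psi>2. endo scale \<psi>2
            \<and> (\<forall>w\<in>W_part scale \<phi>. \<psi>2 w = 0)
            \<and> (\<forall>u\<in>U_part \<phi>. \<psi>2 u = \<psi> u)
          \<longrightarrow> \<psi> = (\<lambda>v. drazin_inv scale \<phi> v + \<psi>2 v)
              \<and> G_drazin scale (nil_part scale \<phi>) \<psi>2)"
proof -
  define s where "s = index \<phi>"
  have linpow: "lin scale (\<phi> ^^ k)" for k by (rule lin_pow[OF linphi])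
  have hs: "(\<phi> ^^ s) u = 0" if "(\<phi> ^^ N) u = 0" for u
  proof -
    have ex: "\<exists>n. \<forall>u\<in>U_part \<phi>. (\<phi> ^^ n) u = 0" using inU_iff by blast
    have "\<forall>u\<in>U_part \<phi>. (\<phi> ^^ s) u = 0" unfolding s_def index_def by (rule LeastI_ex[OF ex])
    then show ?thesis using that inU_iff by blast
  qed
  have g1': "\<phi> (\<psi> (\<phi> v)) = \<phi> v" for v using g1 by (simp add: fun_eq_iff)
  have g2': "\<psi> ((\<phi> ^^ s) v) = (\<phi> ^^ s) (\<psi> v)" for v using g2 by (simp add: fun_eq_iff s_def)
  have psiU: "(\<phi> ^^ N) (\<psi> u) = 0" if u: "(\<phi> ^^ N) u = 0" for u
  proof -
    have "(\<phi> ^^ s) (\<psi> u) = 0" using g2'[of u] hs[OF u] lin_0[OF lpsi] by simp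
    then have "\<psi> u \<in> U_part \<phi>" by (auto simp: U_part_def)
    then show ?thesis using inU_iff by blast
  qed
  have surjW: "\<exists>w'. PE p w' = 0 \<and> w = (\<phi> ^^ k) w'" if "PE p w = 0" for k w
    using that
  proof (induction k arbitrary: w)
    case 0 then show ?case by auto
  next
    case (Suc k)
    then obtain w'' where w'': "PE p w'' = 0" "w = (\<phi> ^^ k) w''" by blast
    have "PE p (D0 w'') = 0" "\<phi> (D0 w'') = w''" using D0_W[OF w''(1)] by auto
    moreover have "w = (\<phi> ^^ Suc k) (D0 w'')" using w''(2) calculation(2)
      by (simp only: funpow_Suc_right comp_apply)
    ultimately show ?case by blast
  qed
  have powW: "PE p ((\<phi> ^^ s) v) = 0" for v
  proof -
    have "(\<phi> ^^ s) v = (\<phi> ^^ s) (PU v) + (\<phi> ^^ s) (PW v)"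
      using lin_add[OF linpow, of s "PU v" "PW v"] decomp[of v, symmetric] by simp
    also have "\<dots> = (\<phi> ^^ s) (PW v)" using hs[OF PU_U] by simp
    finally have "PE p ((\<phi> ^^ s) v) = (\<phi> ^^ s) (PE p (PW v))" by (simp add: PE_pow_comm)
    then show ?thesis using PW_W lin_0[OF linpow] by simp
  qed
  have psiW: "PE p (\<psi> w) = 0" if w: "PE p w = 0" for w
  proof -
    obtain w' where "w = (\<phi> ^^ s) w'" using surjW[OF w] by blast
    then have "\<psi> w = (\<phi> ^^ s) (\<psi> w')" using g2' by simp
    then show ?thesis using powW by simp
  qed
  have psiphiW: "\<psi> (\<phi> w) = w" if w: "PE p w = 0" for w
  proof -
    define x where "x = \<psi> (\<phi> w) - w"
    have "PE p x = 0" using psiW[OF phi_W[OF w]] w by (simp add: x_def lin_diff[OF PE_lin])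
    moreover have "(\<phi> ^^ 1) x = 0" using g1'[of w] by (simp add: x_def lin_diff[OF linphi])
    ultimately have "x = 0" using UW0[OF _ pc] by blast
    then show ?thesis by (simp add: x_def)
  qed
  have psiD: "\<psi> w = D0 w" if w: "PE p w = 0" for w
  proof -
    have "PE p (D0 w) = 0" "\<phi> (D0 w) = w" using D0_W[OF w] by auto
    then show ?thesis using psiphiW by metis
  qed
  define \<Psi> where "\<Psi> v = \<psi> (PU v)" for v
  have linPsi: "lin scale \<Psi>" unfolding \<Psi>_def[abs_def] by (rule lin_comp[OF lpsi lin_PU])
  have PsiW: "\<Psi> w = 0" if "PE p w = 0" for w
    unfolding \<Psi>_def using that PU_on_W lin_0[OF lpsi] by simp
  have PsiU: "\<Psi> u = \<psi> u" if "(\<phi> ^^ N) u = 0" for u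
    unfolding \<Psi>_def using that PU_on_U by simp
  define P where "P f \<longleftrightarrow> endo scale f \<and> (\<forall>w\<in>W_part scale \<phi>. f w = 0) \<and> (\<forall>u\<in>U_part \<phi>. f u = \<psi> u)"
    for f
  have PPsi: "P \<Psi>" unfolding P_def using linPsi PsiW PsiU by (simp add: endo_lin inU_iff inW_iff)
  have uniq: "f = \<Psi>" if "P f" for f
  proof
    fix v
    have lf: "lin scale f" and fW: "\<And>w. PE p w = 0 \<Longrightarrow> f w = 0"
      and fU: "\<And>u. (\<phi> ^^ N) u = 0 \<Longrightarrow> f u = \<psi> u"
      using that by (auto simp: P_def endo_lin inU_iff inW_iff)
    have "f v = f (PU v) + f (PW v)"
      using lin_add[OF lf, of "PU v" "PW v"] decomp[of v, symmetric] by simp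
    also have "\<dots> = \<Psi> v" using fW[OF PW_W] fU[OF PU_U] by (simp add: \<Psi>_def)
    finally show "f v = \<Psi> v" .
  qed
  have decompPsi: "\<psi> = (\<lambda>v. drazin_inv scale \<phi> v + \<Psi> v)"
  proof
    fix v
    have "\<psi> v = \<psi> (PU v) + \<psi> (PW v)"
      using lin_add[OF lpsi, of "PU v" "PW v"] decomp[of v, symmetric] by simp
    also have "\<dots> = \<Psi> v + D0 (PW v)" using psiD[OF PW_W] by (simp add: \<Psi>_def)
    also have "D0 (PW v) = D0 (PU v) + D0 (PW v)" using D0_U[OF PU_U] by simp
    also have "\<dots> = D0 v" using lin_add[OF lin_D0, of "PU v" "PW v"] decomp[of v, symmetric] by simp
    finally show "\<psi> v = drazin_inv scale \<phi> v + \<Psi> v" by (simp add: drazin_eq add.commute)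
  qed
  define \<phi>2 where "\<phi>2 v = \<phi> (PU v)" for v
  have nil: "nil_part scale \<phi> = \<phi>2"
  proof
    fix v
    have e1: "\<phi> v = \<phi> (PU v) + \<phi> (PW v)"
      using lin_add[OF linphi, of "PU v" "PW v"] decomp[of v, symmetric] by simp
    have "D0 (\<phi> v) = D0 (\<phi> (PU v)) + D0 (\<phi> (PW v))" unfolding e1 by (rule lin_add[OF lin_D0])
    also have "\<dots> = D0 (\<phi> (PW v))" using D0_U[OF phi_U[OF PU_U]] by simp
    finally have "\<phi> (D0 (\<phi> v)) = \<phi> (PW v)" using D0_W[OF phi_W[OF PW_W]] by simp
    then show "nil_part scale \<phi> v = \<phi>2 v"
      unfolding nil_part_def core_part_def drazin_eq \<phi>2_def using e1 by simp
  qed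
  have linphi2: "lin scale \<phi>2" unfolding \<phi>2_def[abs_def] by (rule lin_comp[OF linphi lin_PU])
  have pow2: "(\<phi>2 ^^ k) u = (\<phi> ^^ k) u" if u: "(\<phi> ^^ N) u = 0" for k u
  proof (induction k)
    case 0 then show ?case by simp
  next
    case (Suc k)
    have "(\<phi> ^^ N) ((\<phi> ^^ k) u) = (\<phi> ^^ k) ((\<phi> ^^ N) u)" by (rule pow_comm)
    also have "\<dots> = 0" using u lin_0[OF linpow] by simp
    finally have "PU ((\<phi> ^^ k) u) = (\<phi> ^^ k) u" by (rule PU_on_U)
    then show ?case using Suc by (simp add: \<phi>2_def)
  qed
  have zero2: "(\<phi>2 ^^ Suc N) v = 0" for v
  proof -
    have u: "(\<phi> ^^ N) (\<phi>2 v) = 0" unfolding \<phi>2_def by (rule phi_U[OF PU_U])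
    have "(\<phi>2 ^^ Suc N) v = (\<phi>2 ^^ N) (\<phi>2 v)" by (simp only: funpow_Suc_right comp_apply)
    also have "\<dots> = 0" using pow2[OF u] u by simp
    finally show ?thesis .
  qed
  have fp2: "finite_potent scale \<phi>2"
  proof -
    have "range (\<phi>2 ^^ Suc N) = {0}" using zero2 by auto
    then have "fin_dim_subspace scale (range (\<phi>2 ^^ Suc N))"
      unfolding fin_dim_subspace_def by (intro exI[of _ "{}"]) simp
    then have "\<exists>n. fin_dim_subspace scale (range (\<phi>2 ^^ n))" by blast
    then show ?thesis unfolding finite_potent_def using linphi2 endo_lin by blast
  qed
  have c3: "\<phi>2 \<circ> \<Psi> \<circ> \<phi>2 = \<phi>2"
  proof
    fix v
    define y where "y = \<phi> (PU v)"
    have yU: "(\<phi> ^^ N) y = 0" unfolding y_def by (rule phi_U[OF PU_U])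
    have "(\<phi>2 \<circ> \<Psi> \<circ> \<phi>2) v = \<phi> (PU (\<psi> (PU y)))" by (simp add: \<phi>2_def \<Psi>_def y_def)
    also have "\<dots> = \<phi> (\<psi> y)" using PU_on_U[OF yU] PU_on_U[OF psiU[OF yU]] by simp
    also have "\<dots> = \<phi>2 v" unfolding y_def \<phi>2_def using g1' by simp
    finally show "(\<phi>2 \<circ> \<Psi> \<circ> \<phi>2) v = \<phi>2 v" .
  qed
  have c4: "\<Psi> \<circ> (\<phi>2 ^^ index \<phi>2) = (\<phi>2 ^^ index \<phi>2) \<circ> \<Psi>"
  proof -
    have ex2: "\<exists>n. \<forall>u\<in>U_part \<phi>2. (\<phi>2 ^^ n) u = 0" using zero2 by blast
    have Li: "\<forall>u\<in>U_part \<phi>2. (\<phi>2 ^^ index \<phi>2) u = 0"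
      unfolding index_def by (rule LeastI_ex[OF ex2])
    have all: "v \<in> U_part \<phi>2" for v unfolding U_part_def using zero2 by blast
    have z: "(\<phi>2 ^^ index \<phi>2) v = 0" for v using Li all by blast
    show ?thesis by (simp add: fun_eq_iff z lin_0[OF linPsi])
  qed
  have GD: "G_drazin scale (nil_part scale \<phi>) \<Psi>"
    unfolding G_drazin_def nil using fp2 linPsi c3 c4 by (simp add: endo_lin)
  have A: "\<exists>!\<psi>2. P \<psi>2" using PPsi uniq by blast
  have B: "\<forall>\<psi>2. P \<psi>2 \<longrightarrow> \<psi> = (\<lambda>v. drazin_inv scale \<phi> v + \<psi>2 v)
              \<and> G_drazin scale (nil_part scale \<phi>) \<psi>2"
    using uniq decompPsi GD by blast
  show ?thesis using A B unfolding P_def by (rule conjI)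
qed

end

theorem corollary3p5:
  fixes scale :: "'k::field \<Rightarrow> 'v::ab_group_add \<Rightarrow> 'v"
    and \<phi> \<psi> :: "'v \<Rightarrow> 'v"
  assumes "vector_space scale"
    and "finite_potent scale \<phi>"
    and "G_drazin scale \<phi> \<psi>"
  shows "(\<exists>!\<psi>2. endo scale \<psi>2
            \<and> (\<forall>w\<in>W_part scale \<phi>. \<psi>2 w = 0)
            \<and> (\<forall>u\<in>U_part \<phi>. \<psi>2 u = \<psi> u))
       \<and> (\<forall>\<psi>2. endo scale \<psi>2
            \<and> (\<forall>w\<in>W_part scale \<phi>. \<psi>2 w = 0)
            \<and> (\<forall>u\<in>U_part \<phi>. \<psi>2 u = \<psi> u)
          \<longrightarrow> \<psi> = (\<lambda>v. drazin_inv scale \<phi> v + \<psi>2 v)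
              \<and> G_drazin scale (nil_part scale \<phi>) \<psi>2)"
proof -
  interpret vs: vector_space scale by fact
  have lphi: "lin scale \<phi>" using assms(2) by (simp add: finite_potent_def vs.endo_lin)
  obtain n B where fin: "finite B" and sp: "module.span scale B = range (\<phi> ^^ n)"
    using assms(2) unfolding finite_potent_def fin_dim_subspace_def by blast
  interpret FP scale \<phi> using assms(1) lphi by (simp add: FP_def FP_axioms_def)
  obtain Q where Q: "Q \<noteq> 0" "\<And>v. PE Q ((\<phi> ^^ n) v) = 0" using annih[OF fin sp] by blast
  define m where "m = order 0 Q"
  obtain p where Qp: "Q = [:0,1:] ^ m * p" "\<not> [:0,1:] dvd p"
    using order_decomp[OF Q(1), of 0] unfolding m_def by auto
  have pc: "coprime p [:0,1:]" using Qp(2) by (rule X_coprime)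
  have ann: "PE p ((\<phi> ^^ (m + n)) v) = 0" for v
  proof -
    have "0 = PE Q ((\<phi> ^^ n) v)" using Q(2) by simp
    also have "\<dots> = (\<phi> ^^ m) (PE p ((\<phi> ^^ n) v))" unfolding Qp(1) by (simp only: PE_mult PE_Xpow)
    also have "\<dots> = PE p ((\<phi> ^^ m) ((\<phi> ^^ n) v))" by (rule PE_pow_comm[symmetric])
    also have "\<dots> = PE p ((\<phi> ^^ (m + n)) v)" by (simp add: funpow_add)
    finally show ?thesis by simp
  qed
  have "coprime [:0,1:] p" using pc by (simp add: coprime_commute)
  then obtain c e where ce: "c * [:0,1:] + e * p = 1" using bezout_coprime by blast
  then obtain a b where ab: "a * [:0,1:] ^ (m + n) + b * p = 1" using bez_pow by blast
  interpret FP2 scale \<phi> p "m + n" a b c e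
    by (unfold_locales) (use pc ann ab ce in auto)
  have lpsi: "lin scale \<psi>" and g1: "\<phi> \<circ> \<psi> \<circ> \<phi> = \<phi>"
    and g2: "\<psi> \<circ> (\<phi> ^^ index \<phi>) = (\<phi> ^^ index \<phi>) \<circ> \<psi>"
    using assms(3) by (auto simp: G_drazin_def vs.endo_lin)
  show ?thesis by (rule main[OF lpsi g1 g2])
qed

end
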